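(* Let $s\in(0,1)$, $p\in\{1,2\}$ with $p$ admissible, and $\tau\in(0,1)$. Let $B_1(0)\subset\mathbb{R}^N$ be the unit ball centered at the origin, and set $\mathcal A:=\{a\in B_1(0): B_\tau(a)\subset B_1(0)\}$. Then the map $\mathcal A\to\mathbb{R}$, $a\mapsto\lambda_{s,p}\big(B_1(0)\setminus\overline{B_\tau(a)}\big)$, attains its maximum at $a=0$.
   Context: Let $N\ge 1$ and $s\in(0,1)$. For $u\in H^s(\mathbb{R}^N)$ set $[u]_{H^s(\mathbb{R}^N)}^2=\frac{b_{N,s}}{2}\int_{\mathbb{R}^N}\int_{\mathbb{R}^N}\frac{(u(x)-u(y))^2}{|x-y|^{N+2s}}\,dx\,dy$ with $b_{N,s}=s(1-s)\pi^{-N/2}4^s\frac{\Gamma(\frac N2+s)}{\Gamma(2-s)}$. For an open set $O\subset\mathbb{R}^N$ let $\mathcal H^s_0(O)=\{w\in H^s(\mathbb{R}^N): w=0 \text{ a.e. on } \mathbb{R}^N\setminus O\}$. An exponent $p$ is admissible if $p\in[1,\frac{2N}{N-2s})$ when $2s<N$, and $p\in[1,\infty)$ when $2s\ge N$ (which forces $N=1$). For a bounded open set $O$, $\lambda_{s,p}(O):=\inf\{[u]_{H^s(\mathbb{R}^N)}^2: u\in\mathcal H^s_0(O),\ \|u\|_{L^p(O)}=1\}$. $B_r(a)$ denotes the open ball of radius $r$ centered at $a$. *)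

theory Defs
  imports "HOL-Analysis.Analysis"
begin

text \<open>Ambient space R^N is modelled by a Euclidean space type 'a, N = DIM('a).\<close>

definition b_const :: "nat \<Rightarrow> real \<Rightarrow> real" where
  "b_const N s = s * (1 - s) * pi powr (- real N / 2) * 4 powr s
      * Gamma (real N / 2 + s) / Gamma (2 - s)"

definition gagliardo :: "real \<Rightarrow> ('a::euclidean_space \<Rightarrow> real) \<Rightarrow> ennreal" where
  "gagliardo s u = (\<integral>\<^sup>+ x. (\<integral>\<^sup>+ y. ennreal ((u x - u y)\<^sup>2 / norm (x - y) powr (real DIM('a) + 2 * s)) \<partial>lebesgue) \<partial>lebesgue)"

definition Hs :: "real \<Rightarrow> ('a::euclidean_space \<Rightarrow> real) set" where
  "Hs s = {u. u \<in> borel_measurable lebesgue \<and> integrable lebesgue (\<lambda>x. (u x)\<^sup>2)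
              \<and> gagliardo s u < \<infinity>}"

definition Hs_seminorm_sq :: "real \<Rightarrow> ('a::euclidean_space \<Rightarrow> real) \<Rightarrow> real" where
  "Hs_seminorm_sq s u = b_const DIM('a) s / 2 * enn2real (gagliardo s u)"

definition Hs0 :: "real \<Rightarrow> 'a::euclidean_space set \<Rightarrow> ('a \<Rightarrow> real) set" where
  "Hs0 s U = {w \<in> Hs s. AE x in lebesgue. x \<notin> U \<longrightarrow> w x = 0}"

definition Lp_norm_on :: "real \<Rightarrow> 'a::euclidean_space set \<Rightarrow> ('a \<Rightarrow> real) \<Rightarrow> real" where
  "Lp_norm_on p U u = (LINT x:U|lebesgue. \<bar>u x\<bar> powr p) powr (1 / p)"

definition admissible :: "nat \<Rightarrow> real \<Rightarrow> real \<Rightarrow> bool" where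
  "admissible N s p \<longleftrightarrow>
     (if 2 * s < real N then 1 \<le> p \<and> p < 2 * real N / (real N - 2 * s) else 1 \<le> p)"

definition lambda_sp :: "real \<Rightarrow> real \<Rightarrow> 'a::euclidean_space set \<Rightarrow> real" where
  "lambda_sp s p U = Inf {Hs_seminorm_sq s u | u. u \<in> Hs0 s U \<and> Lp_norm_on p U u = 1}"

end

theory Submission
  imports Defs
begin


lemma sigma_finite_lebesgue: "sigma_finite_measure (lebesgue :: 'a::euclidean_space measure)"
proof -
  obtain A :: "'a set set" where A: "countable A" "A \<subseteq> sets lborel" "\<Union>A = space lborel" "\<forall>a\<in>A. emeasure lborel a \<noteq> \<infinity>"
    using sigma_finite_measure.sigma_finite_countable[OF sigma_finite_lborel] by blast
  show ?thesis
    apply unfold_locales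
    apply (rule exI[of _ A])
    using A by (auto simp: emeasure_completion)
qed

interpretation leb: sigma_finite_measure "lebesgue :: 'a::euclidean_space measure"
  by (rule sigma_finite_lebesgue)

definition gk :: "real \<Rightarrow> ('a::euclidean_space \<Rightarrow> real) \<Rightarrow> 'a \<Rightarrow> 'a \<Rightarrow> ennreal" where
  "gk s u x y = ennreal ((u x - u y)\<^sup>2 / norm (x - y) powr (real DIM('a) + 2 * s))"

lemma gagliardo_gk: "gagliardo s u = (\<integral>\<^sup>+ x. (\<integral>\<^sup>+ y. gk s u x y \<partial>lebesgue) \<partial>lebesgue)"
  by (simp add: gagliardo_def gk_def)

lemma id_leb_borel: "(\<lambda>x. x) \<in> (lebesgue :: 'a::euclidean_space measure) \<rightarrow>\<^sub>M borel"
  by (rule measurable_completion) simp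

lemma fst_leb[measurable]: "(fst :: 'a::euclidean_space \<times> 'b::euclidean_space \<Rightarrow> 'a) \<in> (lebesgue \<Otimes>\<^sub>M lebesgue) \<rightarrow>\<^sub>M borel"
  using measurable_compose[OF measurable_fst id_leb_borel, of lebesgue] by simp
lemma snd_leb[measurable]: "(snd :: 'a::euclidean_space \<times> 'b::euclidean_space \<Rightarrow> 'b) \<in> (lebesgue \<Otimes>\<^sub>M lebesgue) \<rightarrow>\<^sub>M borel"
  using measurable_compose[OF measurable_snd id_leb_borel, of lebesgue] by simp

lemma gk_meas:
  assumes [measurable]: "u \<in> borel_measurable lebesgue"
  shows "(\<lambda>(x,y). gk s u x y) \<in> borel_measurable (lebesgue \<Otimes>\<^sub>M lebesgue)"
  unfolding gk_def by measurable

lemma gk_meas2: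
  assumes [measurable]: "u \<in> borel_measurable lebesgue"
  shows "(\<lambda>x. \<integral>\<^sup>+ y. gk s u x y \<partial>lebesgue) \<in> borel_measurable lebesgue"
  using gk_meas[OF assms] by (rule leb.borel_measurable_nn_integral)



definition rf :: "'a::euclidean_space \<Rightarrow> real \<Rightarrow> 'a \<Rightarrow> 'a" where
  "rf k \<alpha> x = x + (\<alpha> - 2 * (x \<bullet> k)) *\<^sub>R k"

lemma rf_affine:
  assumes k: "k \<in> Basis"
  shows "rf k \<alpha> = (\<lambda>x. \<alpha> *\<^sub>R k + (\<Sum>j\<in>Basis. ((if j = k then -1 else 1) * (x \<bullet> j)) *\<^sub>R j))"
proof
  fix x :: 'a
  have "(\<Sum>j\<in>Basis. ((if j = k then -1 else 1) * (x \<bullet> j)) *\<^sub>R j)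
      = (\<Sum>j\<in>Basis. (x \<bullet> j) *\<^sub>R j - (if j = k then 2 * (x \<bullet> j) else 0) *\<^sub>R j)"
    by (intro sum.cong refl) (auto simp flip: scaleR_diff_left)
  also have "\<dots> = x - (2 * (x \<bullet> k)) *\<^sub>R k"
    using k by (simp add: sum_subtractf euclidean_representation if_distrib[of "\<lambda>c. c *\<^sub>R _"] sum.delta cong: if_cong)
  finally show "rf k \<alpha> x = \<alpha> *\<^sub>R k + (\<Sum>j\<in>Basis. ((if j = k then -1 else 1) * (x \<bullet> j)) *\<^sub>R j)"
    by (simp add: rf_def algebra_simps)
qed

lemma rf_meas[measurable]:
  assumes k: "k \<in> Basis"
  shows "rf k \<alpha> \<in> lebesgue \<rightarrow>\<^sub>M lebesgue"
  unfolding rf_affine[OF k]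
  by (rule lebesgue_affine_measurable) simp

lemma rf_nn_integral:
  assumes k: "k \<in> Basis" and f[measurable]: "f \<in> borel_measurable lebesgue"
  shows "(\<integral>\<^sup>+x. f x \<partial>lebesgue) = (\<integral>\<^sup>+x. f (rf k \<alpha> x) \<partial>lebesgue)"
proof -
  have e: "lebesgue = density (distr lebesgue lebesgue (rf k \<alpha>)) (\<lambda>_. 1)"
    using lebesgue_affine_euclidean[of "\<lambda>j. if j = k then -1 else 1" "\<alpha> *\<^sub>R k"]
    unfolding rf_affine[OF k, symmetric]
    by (simp add: prod.neutral)
  have "(\<integral>\<^sup>+x. f x \<partial>lebesgue) = (\<integral>\<^sup>+x. f x \<partial>density (distr lebesgue lebesgue (rf k \<alpha>)) (\<lambda>_. 1))"
    using e by simp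
  also have "\<dots> = (\<integral>\<^sup>+x. f x \<partial>distr lebesgue lebesgue (rf k \<alpha>))"
    by (simp add: density_1)
  also have "\<dots> = (\<integral>\<^sup>+x. f (rf k \<alpha> x) \<partial>lebesgue)"
    using rf_meas[OF k] by (subst nn_integral_distr) auto
  finally show ?thesis .
qed

lemma rf_rf[simp]: "k \<in> Basis \<Longrightarrow> rf k \<alpha> (rf k \<alpha> x) = x"
  by (simp add: rf_def inner_simps algebra_simps)

lemma rf_inner: "k \<in> Basis \<Longrightarrow> rf k \<alpha> x \<bullet> k = \<alpha> - x \<bullet> k"
  by (simp add: rf_def inner_simps)

lemma rf_dist: "k \<in> Basis \<Longrightarrow> norm (rf k \<alpha> x - rf k \<alpha> y) = norm (x - y)"
proof -
  assume k: "k \<in> Basis"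
  have "rf k \<alpha> x - rf k \<alpha> y = (x - y) - (2 * ((x - y) \<bullet> k)) *\<^sub>R k"
    by (simp add: rf_def inner_simps algebra_simps)
  moreover have "norm ((x - y) - (2 * ((x - y) \<bullet> k)) *\<^sub>R k) ^ 2 = norm (x - y) ^ 2"
  proof -
    define z where "z = x - y"
    have kk: "k \<bullet> k = 1" using k by simp
    have "(z - (2 * (z \<bullet> k)) *\<^sub>R k) \<bullet> (z - (2 * (z \<bullet> k)) *\<^sub>R k) = z \<bullet> z"
      by (simp add: inner_diff_left inner_diff_right kk inner_commute[of k z] algebra_simps)
    then show ?thesis by (simp add: power2_norm_eq_inner z_def)
  qed
  ultimately show ?thesis by (metis norm_ge_zero power2_eq_iff_nonneg)
qed



definition phi :: "'a::euclidean_space \<Rightarrow> real \<Rightarrow> 'a \<Rightarrow> real" where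
  "phi k \<alpha> x = \<alpha> * (\<alpha> - 2 * (x \<bullet> k))"

lemma phi_rf: "k \<in> Basis \<Longrightarrow> phi k \<alpha> (rf k \<alpha> x) = - phi k \<alpha> x"
  by (simp add: phi_def rf_inner algebra_simps)

lemma phi_meas[measurable]: "phi k \<alpha> \<in> borel_measurable lebesgue"
proof -
  have "continuous_on UNIV (phi k \<alpha>)" unfolding phi_def by (intro continuous_intros)
  then have "phi k \<alpha> \<in> borel_measurable borel" by (rule borel_measurable_continuous_onI)
  then have "phi k \<alpha> \<in> borel_measurable lborel" by simp
  then show ?thesis by (rule measurable_completion)
qed

lemma phi_zero_null:
  assumes "\<alpha> \<noteq> 0" "k \<in> Basis"
  shows "{x. phi k \<alpha> x = 0} \<in> null_sets lebesgue"
proof -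
  have "{x. phi k \<alpha> x = 0} = {x. k \<bullet> x = \<alpha> / 2}"
    using assms by (auto simp: phi_def inner_commute field_simps)
  moreover have "negligible {x. k \<bullet> x = \<alpha> / 2}"
    using assms by (intro negligible_hyperplane) auto
  ultimately show ?thesis by (simp add: negligible_iff_null_sets)
qed

lemma split_integral:
  assumes a: "\<alpha> \<noteq> 0" and k: "k \<in> Basis" and g[measurable]: "g \<in> borel_measurable lebesgue"
  shows "(\<integral>\<^sup>+x. g x \<partial>lebesgue) = (\<integral>\<^sup>+x. (g x + g (rf k \<alpha> x)) * indicator {x. 0 < phi k \<alpha> x} x \<partial>lebesgue)"
proof -
  let ?L = "{x. 0 < phi k \<alpha> x}" and ?R = "{x. phi k \<alpha> x < 0}" and ?Z = "{x. phi k \<alpha> x = 0}"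
  have [measurable]: "?L \<in> sets lebesgue" "?R \<in> sets lebesgue" "?Z \<in> sets lebesgue"
    using measurable_sets[OF phi_meas, of "{0<..}" k \<alpha>] measurable_sets[OF phi_meas, of "{..<0}" k \<alpha>]
      measurable_sets[OF phi_meas, of "{0}" k \<alpha>] by (auto simp: vimage_def)
  have "(\<integral>\<^sup>+x. g x \<partial>lebesgue) = (\<integral>\<^sup>+x. (g x * indicator ?L x + g x * indicator ?R x) + g x * indicator ?Z x \<partial>lebesgue)"
    by (intro nn_integral_cong) (auto simp: indicator_def)
  also have "\<dots> = (\<integral>\<^sup>+x. g x * indicator ?L x + g x * indicator ?R x \<partial>lebesgue) + (\<integral>\<^sup>+x. g x * indicator ?Z x \<partial>lebesgue)"
    by (rule nn_integral_add) auto
  also have "(\<integral>\<^sup>+x. g x * indicator ?Z x \<partial>lebesgue) = 0"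
    by (rule nn_integral_null_set[OF phi_zero_null[OF a k]])
  also have "(\<integral>\<^sup>+x. g x * indicator ?L x + g x * indicator ?R x \<partial>lebesgue) = (\<integral>\<^sup>+x. g x * indicator ?L x \<partial>lebesgue) + (\<integral>\<^sup>+x. g x * indicator ?R x \<partial>lebesgue)"
    by (rule nn_integral_add) auto
  also have "(\<integral>\<^sup>+x. g x * indicator ?R x \<partial>lebesgue) = (\<integral>\<^sup>+x. g (rf k \<alpha> x) * indicator ?R (rf k \<alpha> x) \<partial>lebesgue)"
    by (rule rf_nn_integral[OF k]) measurable
  also have "\<dots> = (\<integral>\<^sup>+x. g (rf k \<alpha> x) * indicator ?L x \<partial>lebesgue)"
    by (intro nn_integral_cong) (simp add: indicator_def phi_rf[OF k])
  also have "(\<integral>\<^sup>+x. g x * indicator ?L x \<partial>lebesgue) + (\<integral>\<^sup>+x. g (rf k \<alpha> x) * indicator ?L x \<partial>lebesgue)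
      = (\<integral>\<^sup>+x. g x * indicator ?L x + g (rf k \<alpha> x) * indicator ?L x \<partial>lebesgue)"
    using rf_meas[OF k] by (intro nn_integral_add[symmetric]) auto
  finally show ?thesis by (simp add: distrib_right)
qed



lemma polar_real:
  fixes a b c d D1 D2 :: real
  assumes "0 \<le> D1" "D1 \<le> D2" "0 < D2" "D1 = 0 \<Longrightarrow> a = c \<and> b = d"
  shows "(max a b - max c d)\<^sup>2/D1 + (max a b - min c d)\<^sup>2/D2 + (min a b - max c d)\<^sup>2/D2 + (min a b - min c d)\<^sup>2/D1
       \<le> (a-c)\<^sup>2/D1 + (a-d)\<^sup>2/D2 + (b-c)\<^sup>2/D2 + (b-d)\<^sup>2/D1"
proof (cases "D1 = 0")
  case True
  with assms(4) have "a = c" "b = d" by auto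
  then show ?thesis using True by (cases "a \<le> b") (auto simp: max_def min_def power2_commute)
next
  case False
  with assms have D1: "0 < D1" by auto
  define K1 where "K1 = 1 / D1"
  define K2 where "K2 = 1 / D2"
  have K: "K2 \<le> K1" "0 \<le> K2" using assms D1 unfolding K1_def K2_def by (auto simp: frac_le)
  have e: "\<And>z. z / D1 = z * K1" "\<And>z. z / D2 = z * K2" by (simp_all add: K1_def K2_def)
  have key2: "0 \<le> (K1 - K2) * ((a-c)\<^sup>2 + (b-d)\<^sup>2 - (b-c)\<^sup>2 - (a-d)\<^sup>2)" if "(a - b) * (c - d) \<le> 0"
  proof -
    have "(a-c)\<^sup>2 + (b-d)\<^sup>2 - (b-c)\<^sup>2 - (a-d)\<^sup>2 = - 2 * ((a - b) * (c - d))" by (simp add: power2_eq_square algebra_simps)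
    then show ?thesis using that K by (simp add: mult_nonneg_nonpos)
  qed
  show ?thesis
    unfolding e
  proof (cases "a \<le> b"; cases "c \<le> d")
    assume "a \<le> b" "c \<le> d"
    then show "(max a b - max c d)\<^sup>2 * K1 + (max a b - min c d)\<^sup>2 * K2 + (min a b - max c d)\<^sup>2 * K2 + (min a b - min c d)\<^sup>2 * K1
       \<le> (a-c)\<^sup>2 * K1 + (a-d)\<^sup>2 * K2 + (b-c)\<^sup>2 * K2 + (b-d)\<^sup>2 * K1"
      by (simp add: max_def min_def)
  next
    assume "\<not> a \<le> b" "\<not> c \<le> d"
    then show "(max a b - max c d)\<^sup>2 * K1 + (max a b - min c d)\<^sup>2 * K2 + (min a b - max c d)\<^sup>2 * K2 + (min a b - min c d)\<^sup>2 * K1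
       \<le> (a-c)\<^sup>2 * K1 + (a-d)\<^sup>2 * K2 + (b-c)\<^sup>2 * K2 + (b-d)\<^sup>2 * K1"
      by (simp add: max_def min_def)
  next
    assume h: "a \<le> b" "\<not> c \<le> d"
    then have "(a - b) * (c - d) \<le> 0" by (simp add: mult_nonpos_nonneg)
    from key2[OF this] h show "(max a b - max c d)\<^sup>2 * K1 + (max a b - min c d)\<^sup>2 * K2 + (min a b - max c d)\<^sup>2 * K2 + (min a b - min c d)\<^sup>2 * K1
       \<le> (a-c)\<^sup>2 * K1 + (a-d)\<^sup>2 * K2 + (b-c)\<^sup>2 * K2 + (b-d)\<^sup>2 * K1"
      by (simp add: max_def min_def algebra_simps)
  next
    assume h: "\<not> a \<le> b" "c \<le> d"
    then have "(a - b) * (c - d) \<le> 0" by (simp add: mult_nonneg_nonpos)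
    from key2[OF this] h show "(max a b - max c d)\<^sup>2 * K1 + (max a b - min c d)\<^sup>2 * K2 + (min a b - max c d)\<^sup>2 * K2 + (min a b - min c d)\<^sup>2 * K1
       \<le> (a-c)\<^sup>2 * K1 + (a-d)\<^sup>2 * K2 + (b-c)\<^sup>2 * K2 + (b-d)\<^sup>2 * K1"
      by (simp add: max_def min_def algebra_simps)
  qed
qed



declare id_leb_borel[measurable]

definition pol :: "'a::euclidean_space \<Rightarrow> real \<Rightarrow> ('a \<Rightarrow> real) \<Rightarrow> 'a \<Rightarrow> real" where
  "pol k \<alpha> v x = (if 0 < phi k \<alpha> x then max (v x) (v (rf k \<alpha> x))
      else if phi k \<alpha> x < 0 then min (v x) (v (rf k \<alpha> x)) else v x)"

lemma pol_meas[measurable]: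
  assumes k: "k \<in> Basis" and v[measurable]: "v \<in> borel_measurable lebesgue"
  shows "pol k \<alpha> v \<in> borel_measurable lebesgue"
proof -
  have [measurable]: "(\<lambda>x. v (rf k \<alpha> x)) \<in> borel_measurable lebesgue"
    using measurable_compose[OF rf_meas[OF k] v] by simp
  show ?thesis unfolding pol_def by measurable
qed

lemma pol_L: "k \<in> Basis \<Longrightarrow> 0 < phi k \<alpha> x \<Longrightarrow> pol k \<alpha> v x = max (v x) (v (rf k \<alpha> x))"
  by (simp add: pol_def)
lemma pol_L': "k \<in> Basis \<Longrightarrow> 0 < phi k \<alpha> x \<Longrightarrow> pol k \<alpha> v (rf k \<alpha> x) = min (v x) (v (rf k \<alpha> x))"
  by (simp add: pol_def phi_rf min.commute)

lemma pol_equimeas: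
  assumes a: "\<alpha> \<noteq> 0" and k: "k \<in> Basis" and v[measurable]: "v \<in> borel_measurable lebesgue"
    and h[measurable]: "h \<in> borel_measurable borel"
  shows "(\<integral>\<^sup>+x. ennreal (h (pol k \<alpha> v x)) \<partial>lebesgue) = (\<integral>\<^sup>+x. ennreal (h (v x)) \<partial>lebesgue)"
proof -
  have [measurable]: "(\<lambda>x. v (rf k \<alpha> x)) \<in> borel_measurable lebesgue"
    using measurable_compose[OF rf_meas[OF k] v] by simp
  have [measurable]: "pol k \<alpha> v \<in> borel_measurable lebesgue" using k v by (rule pol_meas)
  have "(\<integral>\<^sup>+x. ennreal (h (pol k \<alpha> v x)) \<partial>lebesgue) = (\<integral>\<^sup>+x. (ennreal (h (pol k \<alpha> v x)) + ennreal (h (pol k \<alpha> v (rf k \<alpha> x)))) * indicator {x. 0 < phi k \<alpha> x} x \<partial>lebesgue)"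
    by (rule split_integral[OF a k]) measurable
  also have "\<dots> = (\<integral>\<^sup>+x. (ennreal (h (v x)) + ennreal (h (v (rf k \<alpha> x)))) * indicator {x. 0 < phi k \<alpha> x} x \<partial>lebesgue)"
    by (intro nn_integral_cong) (auto simp: indicator_def pol_L[OF k] pol_L'[OF k] max_def min_def add.commute)
  also have "\<dots> = (\<integral>\<^sup>+x. ennreal (h (v x)) \<partial>lebesgue)"
    by (rule split_integral[OF a k, symmetric]) measurable
  finally show ?thesis .
qed

definition Qf :: "real \<Rightarrow> 'a::euclidean_space \<Rightarrow> real \<Rightarrow> ('a \<Rightarrow> real) \<Rightarrow> 'a \<Rightarrow> 'a \<Rightarrow> ennreal" where
  "Qf s k \<alpha> u x y = gk s u x y + gk s u x (rf k \<alpha> y) + gk s u (rf k \<alpha> x) y + gk s u (rf k \<alpha> x) (rf k \<alpha> y)"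

lemma gk_meas_y[measurable]:
  assumes [measurable]: "u \<in> borel_measurable lebesgue"
  shows "gk s u x \<in> borel_measurable lebesgue"
  unfolding gk_def by measurable

lemma gag_split:
  assumes a: "\<alpha> \<noteq> 0" and k: "k \<in> Basis" and u[measurable]: "u \<in> borel_measurable lebesgue"
  shows "gagliardo s u = (\<integral>\<^sup>+x. (\<integral>\<^sup>+y. Qf s k \<alpha> u x y * indicator {x. 0 < phi k \<alpha> x} y \<partial>lebesgue) * indicator {x. 0 < phi k \<alpha> x} x \<partial>lebesgue)"
proof -
  let ?L = "{x. 0 < phi k \<alpha> x}"
  let ?\<Phi> = "\<lambda>x. \<integral>\<^sup>+ y. gk s u x y \<partial>lebesgue"
  have [measurable]: "?\<Phi> \<in> borel_measurable lebesgue" by (rule gk_meas2[OF u])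
  have [measurable]: "(\<lambda>y. gk s u x (rf k \<alpha> y)) \<in> borel_measurable lebesgue" for x
    using measurable_compose[OF rf_meas[OF k] gk_meas_y[OF u]] by simp
  have [measurable]: "?L \<in> sets lebesgue"
    using measurable_sets[OF phi_meas, of "{0<..}" k \<alpha>] by (auto simp: vimage_def)
  have inner: "?\<Phi> x = (\<integral>\<^sup>+y. (gk s u x y + gk s u x (rf k \<alpha> y)) * indicator ?L y \<partial>lebesgue)" for x
    by (rule split_integral[OF a k]) measurable
  have "gagliardo s u = (\<integral>\<^sup>+x. (?\<Phi> x + ?\<Phi> (rf k \<alpha> x)) * indicator ?L x \<partial>lebesgue)"
    unfolding gagliardo_gk by (rule split_integral[OF a k]) measurable
  also have "\<dots> = (\<integral>\<^sup>+x. (\<integral>\<^sup>+y. Qf s k \<alpha> u x y * indicator ?L y \<partial>lebesgue) * indicator ?L x \<partial>lebesgue)"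
  proof (intro nn_integral_cong)
    fix x
    have "?\<Phi> x + ?\<Phi> (rf k \<alpha> x) = (\<integral>\<^sup>+y. (gk s u x y + gk s u x (rf k \<alpha> y)) * indicator ?L y + (gk s u (rf k \<alpha> x) y + gk s u (rf k \<alpha> x) (rf k \<alpha> y)) * indicator ?L y \<partial>lebesgue)"
      unfolding inner by (rule nn_integral_add[symmetric]) measurable
    also have "\<dots> = (\<integral>\<^sup>+y. Qf s k \<alpha> u x y * indicator ?L y \<partial>lebesgue)"
      by (intro nn_integral_cong) (simp add: Qf_def distrib_right add.assoc)
    finally show "(?\<Phi> x + ?\<Phi> (rf k \<alpha> x)) * indicator ?L x = (\<integral>\<^sup>+y. Qf s k \<alpha> u x y * indicator ?L y \<partial>lebesgue) * indicator ?L x"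
      by simp
  qed
  finally show ?thesis .
qed



lemma rf_cross:
  assumes k: "k \<in> Basis"
  shows "norm (x - rf k \<alpha> y) ^ 2 = norm (x - y) ^ 2 + (\<alpha> - 2 * (y \<bullet> k)) * (\<alpha> - 2 * (x \<bullet> k))"
proof -
  have kk: "k \<bullet> k = 1" using k by simp
  have eq: "x - rf k \<alpha> y = (x - y) - (\<alpha> - 2 * (y \<bullet> k)) *\<^sub>R k" by (simp add: rf_def algebra_simps)
  have "norm (x - rf k \<alpha> y) ^ 2 = ((x - y) - (\<alpha> - 2 * (y \<bullet> k)) *\<^sub>R k) \<bullet> ((x - y) - (\<alpha> - 2 * (y \<bullet> k)) *\<^sub>R k)"
    unfolding eq[symmetric] by (simp add: power2_norm_eq_inner)
  also have "\<dots> = (x - y) \<bullet> (x - y) + (\<alpha> - 2 * (y \<bullet> k)) * (\<alpha> - 2 * (x \<bullet> k))"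
    by (simp add: inner_diff_left inner_diff_right kk inner_commute[of k x] inner_commute[of k y] algebra_simps power2_eq_square)
  finally show ?thesis by (simp add: power2_norm_eq_inner)
qed

lemma rf_cross_le:
  assumes k: "k \<in> Basis" and x: "0 < phi k \<alpha> x" and y: "0 < phi k \<alpha> y"
  shows "norm (x - y) \<le> norm (x - rf k \<alpha> y)"
proof -
  have "0 < phi k \<alpha> x * phi k \<alpha> y" using x y by simp
  then have "0 < \<alpha>\<^sup>2 * ((\<alpha> - 2 * (y \<bullet> k)) * (\<alpha> - 2 * (x \<bullet> k)))"
    by (simp add: phi_def power2_eq_square algebra_simps)
  then have "0 < (\<alpha> - 2 * (y \<bullet> k)) * (\<alpha> - 2 * (x \<bullet> k))"
    by (simp add: zero_less_mult_iff)
  then have "norm (x - y) ^ 2 \<le> norm (x - rf k \<alpha> y) ^ 2" using rf_cross[OF k] by simp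
  then show ?thesis by (simp add: power2_le_iff_abs_le)
qed

lemma Qf_pol_le:
  assumes s: "0 < s" and k: "k \<in> Basis" and x: "0 < phi k \<alpha> x" and y: "0 < phi k \<alpha> y"
  shows "Qf s k \<alpha> (pol k \<alpha> v) x y \<le> Qf s k \<alpha> v x y"
proof -
  let ?q = "real DIM('a) + 2 * s"
  let ?s = "rf k \<alpha>"
  have q: "0 < ?q" using s by simp
  define D1 where "D1 = norm (x - y) powr ?q"
  define D2 where "D2 = norm (x - ?s y) powr ?q"
  have d1: "norm (?s x - ?s y) = norm (x - y)" by (rule rf_dist[OF k])
  have d2: "norm (?s x - y) = norm (x - ?s y)" using rf_dist[OF k, of \<alpha> x "?s y"] k by simp
  have ne: "x \<noteq> ?s y" using x y phi_rf[OF k, of \<alpha> y] by auto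
  have D2: "0 < D2" unfolding D2_def using ne by simp
  have D12: "D1 \<le> D2" unfolding D1_def D2_def using rf_cross_le[OF k x y] q by (intro powr_mono2) auto
  have D10: "0 \<le> D1" unfolding D1_def by simp
  have D1z: "v x = v y \<and> v (?s x) = v (?s y)" if "D1 = 0" using that q by (simp add: D1_def)
  have R: "(max (v x) (v (?s x)) - max (v y) (v (?s y)))\<^sup>2/D1 + (max (v x) (v (?s x)) - min (v y) (v (?s y)))\<^sup>2/D2
       + (min (v x) (v (?s x)) - max (v y) (v (?s y)))\<^sup>2/D2 + (min (v x) (v (?s x)) - min (v y) (v (?s y)))\<^sup>2/D1
       \<le> (v x - v y)\<^sup>2/D1 + (v x - v (?s y))\<^sup>2/D2 + (v (?s x) - v y)\<^sup>2/D2 + (v (?s x) - v (?s y))\<^sup>2/D1"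
    by (rule polar_real[OF D10 D12 D2 D1z])
  have pe: "pol k \<alpha> v x = max (v x) (v (?s x))" "pol k \<alpha> v (?s x) = min (v x) (v (?s x))"
      "pol k \<alpha> v y = max (v y) (v (?s y))" "pol k \<alpha> v (?s y) = min (v y) (v (?s y))"
    using pol_L[OF k x] pol_L'[OF k x] pol_L[OF k y] pol_L'[OF k y] by auto
  have "Qf s k \<alpha> (pol k \<alpha> v) x y = ennreal ((max (v x) (v (?s x)) - max (v y) (v (?s y)))\<^sup>2/D1 + (max (v x) (v (?s x)) - min (v y) (v (?s y)))\<^sup>2/D2
       + (min (v x) (v (?s x)) - max (v y) (v (?s y)))\<^sup>2/D2 + (min (v x) (v (?s x)) - min (v y) (v (?s y)))\<^sup>2/D1)"
    unfolding Qf_def gk_def pe using D10 D2 d1 d2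
    by (simp add: D1_def[symmetric] D2_def[symmetric] ennreal_plus del: ennreal_plus_if)
  also have "\<dots> \<le> ennreal ((v x - v y)\<^sup>2/D1 + (v x - v (?s y))\<^sup>2/D2 + (v (?s x) - v y)\<^sup>2/D2 + (v (?s x) - v (?s y))\<^sup>2/D1)"
    using R by (rule ennreal_leI)
  also have "\<dots> = Qf s k \<alpha> v x y"
    unfolding Qf_def gk_def using D10 D2 d1 d2
    by (simp add: D1_def[symmetric] D2_def[symmetric] ennreal_plus del: ennreal_plus_if)
  finally show ?thesis .
qed

lemma gag_pol_le:
  assumes s: "0 < s" and a: "\<alpha> \<noteq> 0" and k: "k \<in> Basis" and v[measurable]: "v \<in> borel_measurable lebesgue"
  shows "gagliardo s (pol k \<alpha> v) \<le> gagliardo s v"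
  unfolding gag_split[OF a k v] gag_split[OF a k pol_meas[OF k v]]
proof (intro nn_integral_mono)
  fix x
  show "(\<integral>\<^sup>+y. Qf s k \<alpha> (pol k \<alpha> v) x y * indicator {x. 0 < phi k \<alpha> x} y \<partial>lebesgue) * indicator {x. 0 < phi k \<alpha> x} x
     \<le> (\<integral>\<^sup>+y. Qf s k \<alpha> v x y * indicator {x. 0 < phi k \<alpha> x} y \<partial>lebesgue) * indicator {x. 0 < phi k \<alpha> x} x"
  proof (cases "0 < phi k \<alpha> x")
    case True
    have "(\<integral>\<^sup>+y. Qf s k \<alpha> (pol k \<alpha> v) x y * indicator {x. 0 < phi k \<alpha> x} y \<partial>lebesgue)
       \<le> (\<integral>\<^sup>+y. Qf s k \<alpha> v x y * indicator {x. 0 < phi k \<alpha> x} y \<partial>lebesgue)"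
      by (intro nn_integral_mono) (auto simp: indicator_def Qf_pol_le[OF s k True])
    then show ?thesis by (auto simp: indicator_def)
  qed simp
qed



definition good :: "real \<Rightarrow> real \<Rightarrow> 'a::euclidean_space set \<Rightarrow> ('a \<Rightarrow> real) \<Rightarrow> bool" where
  "good s p U v \<longleftrightarrow> v \<in> borel_measurable lebesgue \<and> (\<forall>x. 0 \<le> v x) \<and> (\<forall>x. x \<notin> U \<longrightarrow> v x = 0)
     \<and> (\<integral>\<^sup>+x. ennreal ((v x)\<^sup>2) \<partial>lebesgue) < \<infinity> \<and> gagliardo s v < \<infinity>
     \<and> (\<integral>\<^sup>+x. ennreal (v x powr p) \<partial>lebesgue) = 1"

lemma pol_support:
  assumes k: "k \<in> Basis" and ck: "c \<bullet> k = 0" and nn: "\<And>x. 0 \<le> v x"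
    and sup: "\<And>x. x \<notin> ball 0 1 - cball c \<tau> \<Longrightarrow> v x = 0"
    and x: "x \<notin> ball 0 1 - cball (c + \<alpha> *\<^sub>R k) \<tau>"
  shows "pol k \<alpha> v x = 0"
proof -
  define d where "d = c + \<alpha> *\<^sub>R k"
  have kk: "k \<bullet> k = 1" using k by simp
  have F1: "norm (rf k \<alpha> x) ^ 2 = norm x ^ 2 + phi k \<alpha> x"
    unfolding power2_norm_eq_inner rf_def phi_def
    by (simp add: inner_add_left inner_add_right kk inner_commute[of k x] algebra_simps power2_eq_square)
  have F2: "norm (x - d) ^ 2 = norm (x - c) ^ 2 + phi k \<alpha> x"
    unfolding power2_norm_eq_inner d_def phi_def
    by (simp add: inner_add_left inner_add_right inner_diff_left inner_diff_right kk ck inner_commute[of k x] inner_commute[of k c] inner_commute[of c x] algebra_simps power2_eq_square)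
  have rc: "rf k \<alpha> c = d" by (simp add: rf_def d_def ck)
  have F3: "norm (rf k \<alpha> x - c) = norm (x - d)"
    using rf_dist[OF k, of \<alpha> x d] rf_rf[OF k, of \<alpha> c] rc by simp
  have xd: "1 \<le> norm x \<or> norm (x - d) \<le> \<tau>"
    using x unfolding d_def by (auto simp: dist_norm norm_minus_commute)
  have v0: "v y = 0" if "1 \<le> norm y \<or> norm (y - c) \<le> \<tau>" for y
    using sup[of y] that by (auto simp: dist_norm norm_minus_commute)
  have sq: "a \<le> b" if "a ^ 2 \<le> b ^ 2" "0 \<le> b" for a b :: real
    using that by (rule power2_le_imp_le)
  show ?thesis
  proof (cases "0 < phi k \<alpha> x")
    case True
    have a: "v x = 0"
    proof (cases "1 \<le> norm x")
      case False
      with xd have "norm (x - d) \<le> \<tau>" by auto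
      moreover have "norm (x - c) ^ 2 \<le> norm (x - d) ^ 2" using F2 True by simp
      ultimately have "norm (x - c) \<le> \<tau>" using sq[of "norm (x - c)" "norm (x - d)"] by auto
      then show ?thesis by (rule v0[OF disjI2])
    qed (rule v0, simp)
    have b: "v (rf k \<alpha> x) = 0"
    proof (cases "1 \<le> norm x")
      case True
      have "norm x ^ 2 \<le> norm (rf k \<alpha> x) ^ 2" using F1 \<open>0 < phi k \<alpha> x\<close> by simp
      then have "norm x \<le> norm (rf k \<alpha> x)" by (rule sq) simp
      then show ?thesis using True by (intro v0) simp
    next
      case False
      with xd have "norm (x - d) \<le> \<tau>" by auto
      then show ?thesis using F3 by (intro v0) simp
    qed
    show ?thesis using a b True by (simp add: pol_def)
  next
    case nL: False
    show ?thesis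
    proof (cases "phi k \<alpha> x < 0")
      case True
      have "v x = 0 \<or> v (rf k \<alpha> x) = 0"
      proof (cases "1 \<le> norm x")
        case True then show ?thesis using v0 by auto
      next
        case False
        with xd have "norm (x - d) \<le> \<tau>" by auto
        then show ?thesis using F3 v0 by auto
      qed
      then show ?thesis using True nL nn[of x] nn[of "rf k \<alpha> x"] by (auto simp: pol_def)
    next
      case False
      with nL have z: "phi k \<alpha> x = 0" by simp
      have "v x = 0"
      proof (cases "1 \<le> norm x")
        case True then show ?thesis using v0 by auto
      next
        case False
        with xd have "norm (x - d) \<le> \<tau>" by auto
        moreover have "norm (x - c) ^ 2 = norm (x - d) ^ 2" using F2 z by simp
        ultimately have "norm (x - c) \<le> \<tau>" using sq[of "norm (x - c)" "norm (x - d)"] by auto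
        then show ?thesis by (rule v0[OF disjI2])
      qed
      then show ?thesis using z by (simp add: pol_def)
    qed
  qed
qed

lemma good_pol:
  assumes s: "0 < s" and a: "\<alpha> \<noteq> 0" and k: "k \<in> Basis" and ck: "c \<bullet> k = 0"
    and g: "good s p (ball 0 1 - cball c \<tau>) v"
  shows "good s p (ball 0 1 - cball (c + \<alpha> *\<^sub>R k) \<tau>) (pol k \<alpha> v) \<and> gagliardo s (pol k \<alpha> v) \<le> gagliardo s v"
proof -
  have v[measurable]: "v \<in> borel_measurable lebesgue" and nn: "\<And>x. 0 \<le> v x"
    and sup: "\<And>x. x \<notin> ball 0 1 - cball c \<tau> \<Longrightarrow> v x = 0"
    and l2: "(\<integral>\<^sup>+x. ennreal ((v x)\<^sup>2) \<partial>lebesgue) < \<infinity>" and gf: "gagliardo s v < \<infinity>"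
    and lp: "(\<integral>\<^sup>+x. ennreal (v x powr p) \<partial>lebesgue) = 1"
    using g by (auto simp: good_def)
  have gl: "gagliardo s (pol k \<alpha> v) \<le> gagliardo s v" by (rule gag_pol_le[OF s a k v])
  have "(\<integral>\<^sup>+x. ennreal ((pol k \<alpha> v x)\<^sup>2) \<partial>lebesgue) = (\<integral>\<^sup>+x. ennreal ((v x)\<^sup>2) \<partial>lebesgue)"
    by (rule pol_equimeas[OF a k v, of "\<lambda>t. t\<^sup>2"]) measurable
  moreover have "(\<integral>\<^sup>+x. ennreal (pol k \<alpha> v x powr p) \<partial>lebesgue) = (\<integral>\<^sup>+x. ennreal (v x powr p) \<partial>lebesgue)"
    by (rule pol_equimeas[OF a k v, of "\<lambda>t. t powr p"]) measurable
  moreover have "0 \<le> pol k \<alpha> v x" for x using nn[of x] nn[of "rf k \<alpha> x"] by (simp add: pol_def le_max_iff_disj)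
  moreover have "x \<notin> ball 0 1 - cball (c + \<alpha> *\<^sub>R k) \<tau> \<Longrightarrow> pol k \<alpha> v x = 0" for x
    by (rule pol_support[OF k ck nn sup])
  ultimately show ?thesis using gl gf l2 lp pol_meas[OF k v] unfolding good_def
    by (auto intro: le_less_trans)
qed



lemma b_const_nonneg: "0 < s \<Longrightarrow> s < 1 \<Longrightarrow> 0 \<le> b_const N s"
  unfolding b_const_def
  by (intro divide_nonneg_pos mult_nonneg_nonneg Gamma_real_pos less_imp_le[OF Gamma_real_pos]) auto

lemma good_in:
  assumes g: "good s p U v" and p: "0 < p"
  shows "v \<in> Hs0 s U \<and> Lp_norm_on p U v = 1"
proof -
  have v[measurable]: "v \<in> borel_measurable lebesgue" and nn: "\<And>x. 0 \<le> v x"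
    and sup: "\<And>x. x \<notin> U \<Longrightarrow> v x = 0"
    and l2: "(\<integral>\<^sup>+x. ennreal ((v x)\<^sup>2) \<partial>lebesgue) < \<infinity>" and gf: "gagliardo s v < \<infinity>"
    and lp: "(\<integral>\<^sup>+x. ennreal (v x powr p) \<partial>lebesgue) = 1"
    using g by (auto simp: good_def)
  have "integrable lebesgue (\<lambda>x. (v x)\<^sup>2)"
    unfolding integrable_iff_bounded using l2 by simp
  then have "v \<in> Hs s" using gf by (simp add: Hs_def)
  moreover have "AE x in lebesgue. x \<notin> U \<longrightarrow> v x = 0" using sup by simp
  ultimately have "v \<in> Hs0 s U" by (simp add: Hs0_def)
  moreover have "(LINT x:U|lebesgue. \<bar>v x\<bar> powr p) = (LINT x|lebesgue. v x powr p)"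
    unfolding set_lebesgue_integral_def
    by (intro Bochner_Integration.integral_cong) (auto simp: indicator_def nn abs_of_nonneg sup)
  moreover have "(LINT x|lebesgue. v x powr p) = 1"
    by (subst integral_eq_nn_integral) (auto simp: lp)
  ultimately show ?thesis by (simp add: Lp_norm_on_def)
qed

lemma reduce_good:
  assumes u: "u \<in> Hs0 s U" and n: "Lp_norm_on p U u = 1" and p: "0 < p" and U[measurable]: "U \<in> sets lebesgue"
  shows "\<exists>v. good s p U v \<and> gagliardo s v \<le> gagliardo s u"
proof -
  have um[measurable]: "u \<in> borel_measurable lebesgue" and ui: "integrable lebesgue (\<lambda>x. (u x)\<^sup>2)"
    and gu: "gagliardo s u < \<infinity>" and ae: "AE x in lebesgue. x \<notin> U \<longrightarrow> u x = 0"
    using u by (auto simp: Hs0_def Hs_def)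
  define v where "v x = indicator U x * \<bar>u x\<bar>" for x
  have vm[measurable]: "v \<in> borel_measurable lebesgue" unfolding v_def by measurable
  have nn: "0 \<le> v x" for x by (simp add: v_def)
  have sup: "x \<notin> U \<Longrightarrow> v x = 0" for x by (simp add: v_def)
  have "(\<integral>\<^sup>+x. ennreal ((v x)\<^sup>2) \<partial>lebesgue) \<le> (\<integral>\<^sup>+x. ennreal ((u x)\<^sup>2) \<partial>lebesgue)"
    by (intro nn_integral_mono ennreal_leI) (auto simp: v_def indicator_def)
  also have "\<dots> < \<infinity>" using ui unfolding integrable_iff_bounded by simp
  finally have l2: "(\<integral>\<^sup>+x. ennreal ((v x)\<^sup>2) \<partial>lebesgue) < \<infinity>" .
  have gl: "gagliardo s v \<le> gagliardo s u"
    unfolding gagliardo_def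
  proof (intro nn_integral_mono_AE)
    show "AE x in lebesgue. (\<integral>\<^sup>+y. ennreal ((v x - v y)\<^sup>2 / norm (x - y) powr (real DIM('a) + 2 * s)) \<partial>lebesgue)
        \<le> (\<integral>\<^sup>+y. ennreal ((u x - u y)\<^sup>2 / norm (x - y) powr (real DIM('a) + 2 * s)) \<partial>lebesgue)"
      using ae
    proof eventually_elim
      case (elim x)
      show ?case using ae
      proof (intro nn_integral_mono_AE, eventually_elim)
        case (elim y)
        have e: "(v x - v y)\<^sup>2 \<le> (u x - u y)\<^sup>2"
        proof -
          have "v x = \<bar>u x\<bar>" "v y = \<bar>u y\<bar>" using \<open>x \<notin> U \<longrightarrow> u x = 0\<close> elim by (auto simp: v_def indicator_def)
          then show ?thesis by (simp add: abs_le_square_iff[symmetric] abs_triangle_ineq3)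
        qed
        show ?case by (intro ennreal_leI divide_right_mono e) simp
      qed
    qed
  qed
  have "(LINT x:U|lebesgue. \<bar>u x\<bar> powr p) = (LINT x|lebesgue. v x powr p)"
    unfolding set_lebesgue_integral_def
    by (intro Bochner_Integration.integral_cong) (auto simp: indicator_def v_def)
  moreover have "(LINT x|lebesgue. v x powr p) = enn2real (\<integral>\<^sup>+x. ennreal (v x powr p) \<partial>lebesgue)"
    by (rule integral_eq_nn_integral) auto
  moreover have "(LINT x:U|lebesgue. \<bar>u x\<bar> powr p) = 1"
  proof -
    define L where "L = (LINT x:U|lebesgue. \<bar>u x\<bar> powr p)"
    have L0: "0 \<le> L" unfolding L_def set_lebesgue_integral_def by (rule Bochner_Integration.integral_nonneg) (simp add: indicator_def)
    have "L powr (1/p) = 1" using n by (simp add: Lp_norm_on_def L_def)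
    then have "(L powr (1/p)) powr p = 1" by simp
    then show ?thesis using L0 p by (simp add: powr_powr L_def)
  qed
  ultimately have "enn2real (\<integral>\<^sup>+x. ennreal (v x powr p) \<partial>lebesgue) = 1" by simp
  then have lp: "(\<integral>\<^sup>+x. ennreal (v x powr p) \<partial>lebesgue) = 1"
    by (cases "(\<integral>\<^sup>+x. ennreal (v x powr p) \<partial>lebesgue)") auto
  show ?thesis
    using vm nn sup l2 gl gu lp unfolding good_def by (intro exI[of _ v]) (auto intro: le_less_trans)
qed



lemma scale_affine:
  fixes q :: "'a::euclidean_space"
  shows "(\<lambda>x. (1/r) *\<^sub>R (x - q)) = (\<lambda>x. (- ((1/r) *\<^sub>R q)) + (\<Sum>j\<in>Basis. ((\<lambda>_. 1/r) j * (x \<bullet> j)) *\<^sub>R j))"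
  unfolding scaleR_scaleR[symmetric] scaleR_sum_right[symmetric] euclidean_representation
  by (auto simp: algebra_simps)

lemma scale_meas[measurable]:
  fixes q :: "'a::euclidean_space"
  assumes "0 < r"
  shows "(\<lambda>x. (1/r) *\<^sub>R (x - q)) \<in> lebesgue \<rightarrow>\<^sub>M lebesgue"
  unfolding scale_affine using assms by (intro lebesgue_affine_measurable) auto

lemma scale_int:
  fixes q :: "'a::euclidean_space"
  assumes r: "0 < r" and f[measurable]: "f \<in> borel_measurable lebesgue"
  shows "(\<integral>\<^sup>+x. f ((1/r) *\<^sub>R (x - q)) \<partial>lebesgue) = ennreal (r ^ DIM('a)) * (\<integral>\<^sup>+x. f x \<partial>lebesgue)"
proof -
  let ?T = "\<lambda>x. (1/r) *\<^sub>R (x - q)"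
  have e: "lebesgue = density (distr lebesgue lebesgue ?T) (\<lambda>_. ennreal ((1/r) ^ DIM('a)))"
    using lebesgue_affine_euclidean[of "\<lambda>_. 1/r" "- ((1/r) *\<^sub>R q)"] r
    unfolding scale_affine[symmetric] by (simp add: prod_constant)
  have "(\<integral>\<^sup>+x. f x \<partial>lebesgue) = (\<integral>\<^sup>+x. f x \<partial>density (distr lebesgue lebesgue ?T) (\<lambda>_. ennreal ((1/r) ^ DIM('a))))"
    using e by simp
  also have "\<dots> = (\<integral>\<^sup>+x. ennreal ((1/r) ^ DIM('a)) * f x \<partial>distr lebesgue lebesgue ?T)"
    by (subst nn_integral_density) auto
  also have "\<dots> = ennreal ((1/r) ^ DIM('a)) * (\<integral>\<^sup>+x. f x \<partial>distr lebesgue lebesgue ?T)"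
    by (rule nn_integral_cmult) simp
  also have "\<dots> = ennreal ((1/r) ^ DIM('a)) * (\<integral>\<^sup>+x. f (?T x) \<partial>lebesgue)"
    using scale_meas[OF r, of q] by (subst nn_integral_distr) auto
  finally have *: "(\<integral>\<^sup>+x. f x \<partial>lebesgue) = ennreal ((1/r) ^ DIM('a)) * (\<integral>\<^sup>+x. f (?T x) \<partial>lebesgue)" .
  have "ennreal (r ^ DIM('a)) * ennreal ((1/r) ^ DIM('a)) = 1"
    using r by (simp add: ennreal_mult''[symmetric] power_mult_distrib[symmetric])
  then show ?thesis unfolding * by (simp add: mult.assoc[symmetric])
qed



lemma good_scale:
  fixes q :: "'a::euclidean_space" and v :: "'a \<Rightarrow> real"
  assumes s: "0 < s" and p: "0 < p" and g: "good s p U v" and U: "U \<subseteq> ball 0 1"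
    and r: "0 < r" and V: "ball q r \<subseteq> V"
  shows "\<exists>w. good s p V w"
proof -
  have v[measurable]: "v \<in> borel_measurable lebesgue" and nn: "\<And>x. 0 \<le> v x"
    and sup: "\<And>x. x \<notin> U \<Longrightarrow> v x = 0"
    and l2: "(\<integral>\<^sup>+x. ennreal ((v x)\<^sup>2) \<partial>lebesgue) < \<infinity>" and gf: "gagliardo s v < \<infinity>"
    and lp: "(\<integral>\<^sup>+x. ennreal (v x powr p) \<partial>lebesgue) = 1"
    using g by (auto simp: good_def)
  define T where "T x = (1/r) *\<^sub>R (x - q)" for x
  have Tm[measurable]: "T \<in> lebesgue \<rightarrow>\<^sub>M lebesgue" unfolding T_def[abs_def] using r by (rule scale_meas)
  have Ti: "(\<integral>\<^sup>+x. f (T x) \<partial>lebesgue) = ennreal (r ^ DIM('a)) * (\<integral>\<^sup>+x. f x \<partial>lebesgue)"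
    if "f \<in> borel_measurable lebesgue" for f
    unfolding T_def using scale_int[OF r that] .
  define C where "C = r ^ DIM('a)"
  have C: "0 < C" using r by (simp add: C_def)
  define K where "K = C powr (- 1 / p)"
  have K: "0 < K" using C by (simp add: K_def)
  have KC: "K powr p * C = 1"
  proof -
    have "K powr p = C powr ((- 1 / p) * p)" unfolding K_def by (simp add: powr_powr)
    also have "\<dots> = C powr (- 1)" using p by simp
    also have "\<dots> = 1 / C" using C by (simp add: powr_minus_divide)
    finally show ?thesis using C by simp
  qed
  define w where "w x = K * v (T x)" for x
  have vT[measurable]: "(\<lambda>x. v (T x)) \<in> borel_measurable lebesgue"
    using measurable_compose[OF Tm v] by simp
  have wm[measurable]: "w \<in> borel_measurable lebesgue" unfolding w_def by measurable
  have wnn: "0 \<le> w x" for x using K nn by (simp add: w_def)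
  have wsup: "w x = 0" if "x \<notin> V" for x
  proof -
    have "x \<notin> ball q r" using that V by auto
    then have "r \<le> norm (x - q)" by (simp add: dist_norm norm_minus_commute)
    moreover have "norm (T x) = norm (x - q) / r" using r by (simp add: T_def)
    ultimately have "r * 1 \<le> r * norm (T x)" using r by (simp add: field_simps)
    then have "1 \<le> norm (T x)" using r by (simp only: mult_le_cancel_left_pos)
    then have "T x \<notin> U" using U by auto
    then show ?thesis by (simp add: w_def sup)
  qed
  have "(\<integral>\<^sup>+x. ennreal ((w x)\<^sup>2) \<partial>lebesgue) = (\<integral>\<^sup>+x. ennreal (K\<^sup>2) * ennreal ((v (T x))\<^sup>2) \<partial>lebesgue)"
    by (intro nn_integral_cong) (simp add: w_def power_mult_distrib ennreal_mult)
  also have "\<dots> = ennreal (K\<^sup>2) * (\<integral>\<^sup>+x. ennreal ((v (T x))\<^sup>2) \<partial>lebesgue)"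
    by (rule nn_integral_cmult) measurable
  also have "\<dots> = ennreal (K\<^sup>2) * (ennreal C * (\<integral>\<^sup>+x. ennreal ((v x)\<^sup>2) \<partial>lebesgue))"
    by (subst Ti[of "\<lambda>y. ennreal ((v y)\<^sup>2)"]) (auto simp: C_def)
  also have "\<dots> < \<infinity>" using l2 by (simp add: ennreal_mult_less_top)
  finally have wl2: "(\<integral>\<^sup>+x. ennreal ((w x)\<^sup>2) \<partial>lebesgue) < \<infinity>" .
  have "(\<integral>\<^sup>+x. ennreal (w x powr p) \<partial>lebesgue) = (\<integral>\<^sup>+x. ennreal (K powr p) * ennreal (v (T x) powr p) \<partial>lebesgue)"
    using K nn by (intro nn_integral_cong) (simp add: w_def powr_mult ennreal_mult)
  also have "\<dots> = ennreal (K powr p) * (\<integral>\<^sup>+x. ennreal (v (T x) powr p) \<partial>lebesgue)"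
    by (rule nn_integral_cmult) measurable
  also have "\<dots> = ennreal (K powr p) * (ennreal C * (\<integral>\<^sup>+x. ennreal (v x powr p) \<partial>lebesgue))"
    by (subst Ti[of "\<lambda>y. ennreal (v y powr p)"]) (auto simp: C_def)
  also have "\<dots> = 1" using KC C by (simp add: lp ennreal_mult''[symmetric])
  finally have wlp: "(\<integral>\<^sup>+x. ennreal (w x powr p) \<partial>lebesgue) = 1" .
  define M where "M = K\<^sup>2 / r powr (real DIM('a) + 2 * s)"
  have M: "0 \<le> M" by (simp add: M_def)
  have gkw: "gk s w x y = ennreal M * gk s v (T x) (T y)" for x y
  proof -
    have "T x - T y = (1/r) *\<^sub>R (x - y)" by (simp add: T_def algebra_simps)
    then have n: "norm (x - y) = r * norm (T x - T y)" using r by simp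
    have "(w x - w y)\<^sup>2 = K\<^sup>2 * (v (T x) - v (T y))\<^sup>2" by (simp add: w_def power_mult_distrib[symmetric] right_diff_distrib)
    moreover have "norm (x - y) powr (real DIM('a) + 2 * s) = r powr (real DIM('a) + 2 * s) * norm (T x - T y) powr (real DIM('a) + 2 * s)"
      unfolding n using r by (simp add: powr_mult)
    ultimately have "(w x - w y)\<^sup>2 / norm (x - y) powr (real DIM('a) + 2 * s) = M * ((v (T x) - v (T y))\<^sup>2 / norm (T x - T y) powr (real DIM('a) + 2 * s))"
      by (simp add: M_def)
    then show ?thesis unfolding gk_def using M by (simp only: ennreal_mult divide_nonneg_nonneg zero_le_power2 powr_ge_zero)
  qed
  have "gagliardo s w = (\<integral>\<^sup>+x. (\<integral>\<^sup>+y. ennreal M * gk s v (T x) (T y) \<partial>lebesgue) \<partial>lebesgue)"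
    unfolding gagliardo_gk gkw ..
  also have "\<dots> = (\<integral>\<^sup>+x. ennreal M * (ennreal C * (\<integral>\<^sup>+y. gk s v (T x) y \<partial>lebesgue)) \<partial>lebesgue)"
  proof (intro nn_integral_cong)
    fix x
    have [measurable]: "gk s v (T x) \<in> borel_measurable lebesgue" by (rule gk_meas_y[OF v])
    have "(\<integral>\<^sup>+y. ennreal M * gk s v (T x) (T y) \<partial>lebesgue) = ennreal M * (\<integral>\<^sup>+y. gk s v (T x) (T y) \<partial>lebesgue)"
      by (rule nn_integral_cmult) measurable
    also have "\<dots> = ennreal M * (ennreal C * (\<integral>\<^sup>+y. gk s v (T x) y \<partial>lebesgue))"
      by (subst Ti) (auto simp: C_def)
    finally show "(\<integral>\<^sup>+y. ennreal M * gk s v (T x) (T y) \<partial>lebesgue) = ennreal M * (ennreal C * (\<integral>\<^sup>+y. gk s v (T x) y \<partial>lebesgue))" .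
  qed
  also have "\<dots> = ennreal M * (ennreal C * (\<integral>\<^sup>+x. (\<integral>\<^sup>+y. gk s v (T x) y \<partial>lebesgue) \<partial>lebesgue))"
  proof -
    have [measurable]: "(\<lambda>x. \<integral>\<^sup>+ y. gk s v x y \<partial>lebesgue) \<in> borel_measurable lebesgue" by (rule gk_meas2[OF v])
    have [measurable]: "(\<lambda>x. \<integral>\<^sup>+ y. gk s v (T x) y \<partial>lebesgue) \<in> borel_measurable lebesgue"
      using measurable_compose[OF Tm gk_meas2[OF v]] by simp
    show ?thesis
      by (simp add: nn_integral_cmult mult.assoc[symmetric])
  qed
  also have "\<dots> = ennreal M * (ennreal C * (ennreal C * gagliardo s v))"
    unfolding gagliardo_gk by (subst Ti[OF gk_meas2[OF v]]) (simp add: C_def)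
  also have "\<dots> < \<infinity>" using gf by (simp add: ennreal_mult_less_top)
  finally have wg: "gagliardo s w < \<infinity>" .
  show ?thesis using wm wnn wsup wl2 wg wlp unfolding good_def by blast
qed



definition SS :: "real \<Rightarrow> real \<Rightarrow> 'a::euclidean_space set \<Rightarrow> real set" where
  "SS s p U = {Hs_seminorm_sq s u | u. u \<in> Hs0 s U \<and> Lp_norm_on p U u = 1}"

lemma lambda_SS: "lambda_sp s p U = Inf (SS s p U)"
  by (simp add: lambda_sp_def SS_def)

lemma Om_sets: "(ball 0 1 - cball c \<tau> :: 'a::euclidean_space set) \<in> sets lebesgue"
  using lmeasurable_ball lmeasurable_cball by (intro sets.Diff) (auto simp: fmeasurable_def)

lemma ball_inside:
  fixes c :: "'a::euclidean_space"
  assumes "0 \<le> \<tau>" "\<tau> < 1"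
  shows "\<exists>q r. 0 < r \<and> ball q r \<subseteq> ball 0 1 - cball c \<tau>"
proof -
  obtain b :: 'a where b: "b \<in> Basis" using nonempty_Basis by blast
  define e where "e = (if b \<bullet> c \<le> 0 then b else - b)"
  have ne: "norm e = 1" using b by (simp add: e_def)
  have ec: "e \<bullet> c \<le> 0" by (simp add: e_def)
  define \<rho> where "\<rho> = (1 + \<tau>) / 2"
  define r where "r = (1 - \<tau>) / 2"
  have r: "0 < r" using assms by (simp add: r_def)
  have \<rho>: "0 \<le> \<rho>" using assms by (simp add: \<rho>_def)
  have rr: "\<rho> + r = 1" "\<rho> - r = \<tau>" by (simp_all add: \<rho>_def r_def field_simps)
  have qc: "\<rho> \<le> norm (\<rho> *\<^sub>R e - c)"
  proof -
    have "norm (\<rho> *\<^sub>R e - c) ^ 2 = \<rho>\<^sup>2 * (e \<bullet> e) - 2 * \<rho> * (e \<bullet> c) + c \<bullet> c"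
      unfolding power2_norm_eq_inner by (simp add: inner_diff_left inner_diff_right inner_commute[of c e] algebra_simps power2_eq_square)
    also have "e \<bullet> e = 1" using ne by (simp add: norm_eq_1)
    finally have nq: "norm (\<rho> *\<^sub>R e - c) ^ 2 = \<rho>\<^sup>2 - 2 * \<rho> * (e \<bullet> c) + c \<bullet> c" by simp
    moreover have "2 * \<rho> * (e \<bullet> c) \<le> 0" using ec \<rho> by (simp add: mult_nonneg_nonpos)
    moreover have "0 \<le> c \<bullet> c" by simp
    ultimately have "\<rho>\<^sup>2 \<le> norm (\<rho> *\<^sub>R e - c) ^ 2" by linarith
    then show ?thesis by (rule power2_le_imp_le) simp
  qed
  have "ball (\<rho> *\<^sub>R e) r \<subseteq> ball 0 1 - cball c \<tau>"
  proof
    fix x assume x: "x \<in> ball (\<rho> *\<^sub>R e) r"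
    then have d: "norm (x - \<rho> *\<^sub>R e) < r" by (simp add: dist_norm norm_minus_commute)
    have "norm x \<le> norm (\<rho> *\<^sub>R e) + norm (x - \<rho> *\<^sub>R e)" by (rule norm_triangle_sub)
    also have "norm (\<rho> *\<^sub>R e) = \<rho>" using ne \<rho> by simp
    finally have "norm x < 1" using d rr by linarith
    moreover have "norm (\<rho> *\<^sub>R e - c) \<le> norm (x - c) + norm (x - \<rho> *\<^sub>R e)"
      using norm_triangle_ineq4[of "x - c" "x - \<rho> *\<^sub>R e"] by simp
    then have "\<tau> < norm (x - c)" using qc d rr by linarith
    ultimately show "x \<in> ball 0 1 - cball c \<tau>" by (simp add: dist_norm norm_minus_commute)
  qed
  then show ?thesis using r by blast
qed

lemma SS_transfer:
  fixes c d :: "'a::euclidean_space"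
  assumes s: "0 < s" and p: "0 < p" and t: "0 \<le> \<tau>" "\<tau> < 1"
    and ne: "SS s p (ball 0 1 - cball d \<tau>) \<noteq> {}"
  shows "SS s p (ball 0 1 - cball c \<tau>) \<noteq> {}"
proof -
  obtain u where u: "u \<in> Hs0 s (ball 0 1 - cball d \<tau>)" "Lp_norm_on p (ball 0 1 - cball d \<tau>) u = 1"
    using ne by (auto simp: SS_def)
  obtain v where v: "good s p (ball 0 1 - cball d \<tau>) v"
    using reduce_good[OF u p Om_sets] by blast
  obtain q r where qr: "0 < r" "ball q r \<subseteq> ball 0 1 - cball c \<tau>" using ball_inside[OF t] by blast
  obtain w where "good s p (ball 0 1 - cball c \<tau>) w"
    using good_scale[OF s p v _ qr] by blast
  from good_in[OF this p] show ?thesis by (auto simp: SS_def)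
qed

lemma SS_nonneg: "0 < s \<Longrightarrow> s < 1 \<Longrightarrow> z \<in> SS s p U \<Longrightarrow> 0 \<le> z"
  unfolding SS_def Hs_seminorm_sq_def
  by (auto intro!: mult_nonneg_nonneg divide_nonneg_nonneg b_const_nonneg simp del: times_divide_eq_left)

lemma lam_step:
  fixes c :: "'a::euclidean_space"
  assumes s: "0 < s" "s < 1" and p: "0 < p" and t: "0 \<le> \<tau>" "\<tau> < 1" and k: "k \<in> Basis" and ck: "c \<bullet> k = 0"
  shows "lambda_sp s p (ball 0 1 - cball (c + \<alpha> *\<^sub>R k) \<tau>) \<le> lambda_sp s p (ball 0 1 - cball c \<tau>)"
proof (cases "\<alpha> = 0")
  case True then show ?thesis by simp
next
  case a: False
  let ?Sd = "SS s p (ball 0 1 - cball (c + \<alpha> *\<^sub>R k) \<tau>)" and ?Sc = "SS s p (ball 0 1 - cball c \<tau>)"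
  show ?thesis
  proof (cases "?Sc = {}")
    case True
    then have "?Sd = {}" using SS_transfer[OF s(1) p t, of "c + \<alpha> *\<^sub>R k" c] by blast
    then show ?thesis using True by (simp add: lambda_SS)
  next
    case False
    have "Inf ?Sd \<le> Inf ?Sc"
    proof (rule cInf_mono[OF False])
      show "bdd_below ?Sd" using SS_nonneg[OF s] by (intro bdd_belowI[of _ 0]) blast
    next
      fix z assume "z \<in> ?Sc"
      then obtain u where u: "u \<in> Hs0 s (ball 0 1 - cball c \<tau>)" "Lp_norm_on p (ball 0 1 - cball c \<tau>) u = 1"
        and z: "z = Hs_seminorm_sq s u" by (auto simp: SS_def)
      obtain v where v: "good s p (ball 0 1 - cball c \<tau>) v" and gv: "gagliardo s v \<le> gagliardo s u"
        using reduce_good[OF u p Om_sets] by blast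
      have w: "good s p (ball 0 1 - cball (c + \<alpha> *\<^sub>R k) \<tau>) (pol k \<alpha> v)" and gw: "gagliardo s (pol k \<alpha> v) \<le> gagliardo s v"
        using good_pol[OF s(1) a k ck v] by auto
      have gu: "gagliardo s u < \<infinity>" using u(1) by (simp add: Hs0_def Hs_def)
      have "Hs_seminorm_sq s (pol k \<alpha> v) \<in> ?Sd" using good_in[OF w p] by (auto simp: SS_def)
      moreover have "Hs_seminorm_sq s (pol k \<alpha> v) \<le> z"
        unfolding z Hs_seminorm_sq_def
        using b_const_nonneg[OF s, of "DIM('a)"] gw gv gu
        by (intro mult_left_mono enn2real_mono) auto
      ultimately show "\<exists>a\<in>?Sd. a \<le> z" by blast
    qed
    then show ?thesis by (simp add: lambda_SS)
  qed
qed



lemma lam_all: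
  fixes a :: "'a::euclidean_space"
  assumes s: "0 < s" "s < 1" and p: "0 < p" and t: "0 \<le> \<tau>" "\<tau> < 1"
  shows "lambda_sp s p (ball 0 1 - cball a \<tau>) \<le> lambda_sp s p (ball 0 1 - cball (0::'a) \<tau>)"
proof -
  have "F \<subseteq> Basis \<Longrightarrow> lambda_sp s p (ball 0 1 - cball (\<Sum>b\<in>F. (a \<bullet> b) *\<^sub>R b) \<tau>) \<le> lambda_sp s p (ball 0 1 - cball (0::'a) \<tau>)" for F
  proof (induction F rule: infinite_finite_induct)
    case (infinite F)
    then show ?case using finite_Basis finite_subset by blast
  next
    case empty
    then show ?case by simp
  next
    case (insert k F)
    have k: "k \<in> Basis" and F: "F \<subseteq> Basis" using insert.prems by auto
    define c where "c = (\<Sum>b\<in>F. (a \<bullet> b) *\<^sub>R b)"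
    have ck: "c \<bullet> k = 0"
      unfolding c_def inner_sum_left using F k insert.hyps(2)
    proof (intro sum.neutral ballI)
      fix x assume x: "x \<in> F"
      then have "x \<in> Basis" "x \<noteq> k" using F insert.hyps(2) by auto
      then show "(a \<bullet> x) *\<^sub>R x \<bullet> k = 0" using k by (simp add: inner_not_same_Basis)
    qed
    have "(\<Sum>b\<in>insert k F. (a \<bullet> b) *\<^sub>R b) = c + (a \<bullet> k) *\<^sub>R k"
      using insert.hyps by (simp add: c_def add.commute)
    then have "lambda_sp s p (ball 0 1 - cball (\<Sum>b\<in>insert k F. (a \<bullet> b) *\<^sub>R b) \<tau>) \<le> lambda_sp s p (ball 0 1 - cball c \<tau>)"
      using lam_step[OF s p t k ck] by simp
    also have "\<dots> \<le> lambda_sp s p (ball 0 1 - cball (0::'a) \<tau>)"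
      using insert.IH F by (simp add: c_def)
    finally show ?case .
  qed
  from this[of Basis] show ?thesis by (simp add: euclidean_representation)
qed

theorem theorem1p4:
  fixes s p \<tau> :: real
  assumes "0 < s" "s < 1"
    and "p \<in> {1, 2}" "admissible DIM('a::euclidean_space) s p"
    and "0 < \<tau>" "\<tau> < 1"
  defines "A \<equiv> {a :: 'a. a \<in> ball 0 1 \<and> ball a \<tau> \<subseteq> ball 0 1}"
  shows "0 \<in> A \<and>
    (\<forall>a\<in>A. lambda_sp s p (ball 0 1 - closure (ball a \<tau>))
             \<le> lambda_sp s p (ball 0 1 - closure (ball (0::'a) \<tau>)))"
proof
  show "0 \<in> A" using assms(6) by (auto simp: A_def)
  have p: "0 < p" using assms(3) by auto
  show "\<forall>a\<in>A. lambda_sp s p (ball 0 1 - closure (ball a \<tau>))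
             \<le> lambda_sp s p (ball 0 1 - closure (ball (0::'a) \<tau>))"
  proof
    fix a :: 'a assume "a \<in> A"
    have "lambda_sp s p (ball 0 1 - cball a \<tau>) \<le> lambda_sp s p (ball 0 1 - cball (0::'a) \<tau>)"
      using lam_all[OF assms(1,2) p _ assms(6)] assms(5) by simp
    then show "lambda_sp s p (ball 0 1 - closure (ball a \<tau>)) \<le> lambda_sp s p (ball 0 1 - closure (ball (0::'a) \<tau>))"
      using assms(5) by simp
  qed
qed

end
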